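(* Let $g:\mathbb{R}^n\to\mathbb{R}^n$ and $h:\mathbb{R}\to\mathbb{R}^n$ be smooth, and let $(\rho_\varepsilon)_{\varepsilon\in(0,1)}$ be a net of smooth functions $\rho_\varepsilon:\mathbb{R}\to\mathbb{R}$ such that $\operatorname{supp}(\rho_\varepsilon)\subseteq[-\varepsilon,\varepsilon]$ for all $\varepsilon\in(0,1)$, and such that there exist $\eta>0$ and $C\ge 0$ with $\int|\rho_\varepsilon(x)|\,dx\le C$ for all $\varepsilon\in(0,\eta)$. For $x_0,\dot x_0\in\mathbb{R}^n$ and $\varepsilon\in(0,\eta)$ consider the initial value problem $$\ddot x_\varepsilon(t)=g(x_\varepsilon(t))\rho_\varepsilon(t)+h(t),\qquad x_\varepsilon(-1)=x_0,\qquad \dot x_\varepsilon(-1)=\dot x_0.$$ Let $b>0$, $M=\int_{-1}^1\int_{-1}^s|h(r)|\,dr\,ds$, $I=\{x\in\mathbb{R}^n: |x-x_0|\le b+|\dot x_0|+M\}$, let $L$ be a Lipschitz constant for $g$ on $I$, and set $$\alpha=\min\Big\{\frac{b}{C\|g\|_{L^\infty(I)}+|\dot x_0|},\ \frac{1}{2LC},\ 1\Big\}.$$ Then the initial value problem has a unique solution on $J_\varepsilon=[-1,\alpha-\varepsilon]$. Consequently, for $\varepsilon$ sufficiently small, $x_\varepsilon$ is defined on all of $\mathbb{R}$, and both $x_\varepsilon$ and $\dot x_\varepsilon$ are bounded on compact subsets of $\mathbb{R}$, uniformly in $\varepsilon$. *)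

theory Defs
  imports "HOL-Analysis.Analysis"
begin

text \<open>Smoothness (C-infinity): there is a family of functions containing f, consisting of
  continuous functions, and closed under taking partial derivatives in every coordinate
  direction, i.e. all partial derivatives of all orders exist and are continuous.\<close>
definition smooth_fun :: "('a::euclidean_space \<Rightarrow> 'b::real_normed_vector) \<Rightarrow> bool" where
  "smooth_fun f \<longleftrightarrow> (\<exists>S. f \<in> S \<and>
     (\<forall>\<phi>\<in>S. continuous_on UNIV \<phi> \<and>
        (\<forall>i\<in>Basis. \<exists>\<psi>\<in>S. \<forall>x. ((\<lambda>t. \<phi> (x + t *\<^sub>R i)) has_vector_derivative \<psi> x) (at 0))))"

text \<open>(x, v) solves  x'' = g(x) r(t) + h(t), x(-1) = x0, x'(-1) = x1  on the interval J
  (v is the velocity x'; one-sided derivatives at endpoints of J).\<close>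
definition ivp_sol ::
  "('n::euclidean_space \<Rightarrow> 'n) \<Rightarrow> (real \<Rightarrow> real) \<Rightarrow> (real \<Rightarrow> 'n) \<Rightarrow> 'n \<Rightarrow> 'n
    \<Rightarrow> real set \<Rightarrow> (real \<Rightarrow> 'n) \<Rightarrow> (real \<Rightarrow> 'n) \<Rightarrow> bool" where
  "ivp_sol g r h x0 x1 J x v \<longleftrightarrow> x (-1) = x0 \<and> v (-1) = x1 \<and>
     (\<forall>t\<in>J. (x has_vector_derivative v t) (at t within J) \<and>
            (v has_vector_derivative (r t *\<^sub>R g (x t) + h t)) (at t within J))"

text \<open>alpha = min{ b/(C G + |x1|), 1/(2 L C), 1 }, a quotient with zero denominator read as +infinity.\<close>
definition alpha_const :: "real \<Rightarrow> real \<Rightarrow> real \<Rightarrow> real \<Rightarrow> real \<Rightarrow> real" where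
  "alpha_const b C G v L =
     min 1 (min (if C * G + v > 0 then b / (C * G + v) else 1)
                (if L * C > 0 then 1 / (2 * L * C) else 1))"

end

theory Submission
  imports Defs
begin


lemma ind_cont:
  fixes k :: "real \<Rightarrow> 'a::euclidean_space"
  assumes "continuous_on {a..b} k"
  shows "continuous_on {a..b} (\<lambda>s. integral {a..s} k)"
  using assms indefinite_integral_continuous_1 integrable_continuous_real by blast

lemma cont_int:
  fixes k :: "real \<Rightarrow> 'a::euclidean_space"
  assumes "continuous_on {a..b} k" "a \<le> c" "d \<le> b"
  shows "k integrable_on {c..d}"
  using assms by (meson atLeastatMost_subset_iff continuous_on_subset integrable_continuous_real order_refl)

definition sint :: "(real \<Rightarrow> 'a::banach) \<Rightarrow> real \<Rightarrow> 'a" where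
  "sint k t = (if -1 \<le> t then integral {-1..t} k else - integral {t..-1} k)"

lemma sint_deriv:
  fixes k :: "real \<Rightarrow> 'a::euclidean_space"
  assumes kc: "continuous_on UNIV k"
  shows "(sint k has_vector_derivative k t) (at t)"
proof -
  define a where "a = min (-1) (t - 1)"
  define b where "b = max (-1) (t + 1)"
  have kc': "continuous_on {a..b} k" using kc continuous_on_subset by blast
  have ki: "k integrable_on {c..d}" for c d using kc continuous_on_subset integrable_continuous_real by blast
  have eq: "integral {a..u} k - integral {a..-1} k = sint k u" if u: "u \<in> {a<..<b}" for u
  proof (cases "-1 \<le> u")
    case True
    have "integral {a..-1} k + integral {-1..u} k = integral {a..u} k"
      using True ki by (intro Henstock_Kurzweil_Integration.integral_combine) (auto simp: a_def)
    then show ?thesis using True unfolding sint_def by (simp add: algebra_simps)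
  next
    case False
    have "integral {a..u} k + integral {u..-1} k = integral {a..-1} k"
      using False u ki by (intro Henstock_Kurzweil_Integration.integral_combine) (auto simp: a_def)
    then show ?thesis using False unfolding sint_def by (simp add: algebra_simps)
  qed
  have t: "t \<in> {a<..<b}" unfolding a_def b_def by auto
  have "((\<lambda>u. integral {a..u} k - integral {a..-1} k) has_vector_derivative k t) (at t within {a..b})"
    using integral_has_vector_derivative[OF kc', of t] t
    by (auto intro!: derivative_eq_intros)
  then have "((\<lambda>u. integral {a..u} k - integral {a..-1} k) has_vector_derivative k t) (at t within {a<..<b})"
    by (rule has_vector_derivative_within_subset) auto
  then have "((\<lambda>u. integral {a..u} k - integral {a..-1} k) has_vector_derivative k t) (at t)"
    using has_vector_derivative_within_open[OF t] by auto
  then show ?thesis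
    by (rule has_vector_derivative_transform_within_open[OF _ _ t]) (auto simp: eq)
qed

definition Fop :: "(real \<Rightarrow> real) \<Rightarrow> ('a::euclidean_space \<Rightarrow> 'a) \<Rightarrow> (real \<Rightarrow> 'a) \<Rightarrow> 'a \<Rightarrow> 'a
    \<Rightarrow> (real \<Rightarrow> 'a) \<Rightarrow> real \<Rightarrow> 'a" where
  "Fop r f h x0 x1 z t = x0 + integral {-1..t} (\<lambda>s. x1 + integral {-1..s} (\<lambda>q. r q *\<^sub>R f (z q) + h q))"

locale rctx =
  fixes r :: "real \<Rightarrow> real" and \<epsilon> C :: real
  assumes r_cont: "continuous_on UNIV r"
    and r_zero: "\<And>t. t \<notin> {-\<epsilon><..<\<epsilon>} \<Longrightarrow> r t = 0"
    and r_int: "\<And>a b. integral {a..b} (\<lambda>t. \<bar>r t\<bar>) \<le> C"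
    and eps_pos: "0 < \<epsilon>" and eps_le: "\<epsilon> \<le> 1" and C_nn: "0 \<le> C"
begin

lemma est:
  fixes \<phi> :: "real \<Rightarrow> 'a::euclidean_space"
  assumes phic: "continuous_on {-1..t} \<phi>" and t: "-1 \<le> t"
    and bd: "\<And>q. q \<in> {-1..t} \<Longrightarrow> norm (\<phi> q) \<le> K * \<bar>r q\<bar>" and K: "0 \<le> K"
  shows "norm (integral {-1..t} (\<lambda>s. integral {-1..s} \<phi>)) \<le> max 0 (t + \<epsilon>) * (C * K)"
proof -
  define \<psi> where "\<psi> s = integral {-1..s} \<phi>" for s
  have phii: "\<phi> integrable_on {-1..t}" using phic integrable_continuous_real by blast
  have psic: "continuous_on {-1..t} \<psi>" unfolding \<psi>_def
    by (rule indefinite_integral_continuous_1[OF phii])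
  have psii: "\<psi> integrable_on {-1..t}" using psic integrable_continuous_real by blast
  have rc2: "continuous_on S r" for S using r_cont continuous_on_subset by blast
  have rc: "continuous_on S (\<lambda>q. \<bar>r q\<bar>)" for S
    using r_cont by (intro continuous_intros) (auto intro: continuous_on_subset)
  have psi_bd: "norm (\<psi> s) \<le> K * C" if s: "s \<in> {-1..t}" for s
  proof -
    have "norm (\<psi> s) \<le> integral {-1..s} (\<lambda>q. K * \<bar>r q\<bar>)"
      unfolding \<psi>_def
      apply (rule integral_norm_bound_integral)
      using s phii integrable_on_subinterval apply (metis atLeastAtMost_iff atLeastatMost_subset_iff order_refl)
      apply (intro integrable_continuous_real continuous_intros rc2)
      using bd s by auto
    also have "\<dots> = K * integral {-1..s} (\<lambda>q. \<bar>r q\<bar>)" by simp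
    also have "\<dots> \<le> K * C" using r_int K by (intro mult_left_mono) auto
    finally show ?thesis .
  qed
  have psi0: "\<psi> s = 0" if s: "s \<le> -\<epsilon>" "s \<le> t" for s
  proof -
    have "\<psi> s = integral {-1..s} (\<lambda>q. 0::'a)"
      unfolding \<psi>_def
    proof (rule integral_cong)
      fix q assume "q \<in> {-1..s}"
      then have "r q = 0" using s by (intro r_zero) auto
      then show "\<phi> q = 0" using bd[of q] \<open>q \<in> {-1..s}\<close> s by auto
    qed
    then show ?thesis by simp
  qed
  have "norm (integral {-1..t} \<psi>) \<le> max 0 (t + \<epsilon>) * (C * K)"
  proof (cases "t \<le> -\<epsilon>")
    case True
    then have "integral {-1..t} \<psi> = integral {-1..t} (\<lambda>_. 0::'a)"
      by (intro integral_cong psi0) auto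
    then show ?thesis using C_nn K by simp
  next
    case False
    have e1: "-1 \<le> -\<epsilon>" using eps_le by simp
    have "integral {-1..-\<epsilon>} \<psi> + integral {-\<epsilon>..t} \<psi> = integral {-1..t} \<psi>"
      using False e1 psii by (intro Henstock_Kurzweil_Integration.integral_combine[OF e1]) auto
    moreover have "integral {-1..-\<epsilon>} \<psi> = integral {-1..-\<epsilon>} (\<lambda>_. 0::'a)"
      using False by (intro integral_cong psi0) auto
    moreover have "norm (integral {-\<epsilon>..t} \<psi>) \<le> integral {-\<epsilon>..t} (\<lambda>_. K * C)"
      apply (rule integral_norm_bound_integral)
      using psii integrable_on_subinterval e1 apply (metis atLeastatMost_subset_iff order_refl)
       apply (rule integrable_continuous_real, rule continuous_on_const)
      using psi_bd e1 by auto
    ultimately show ?thesis using False by (simp add: content_real algebra_simps)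
  qed
  then show ?thesis unfolding \<psi>_def .
qed

lemma bound:
  fixes \<phi> h :: "real \<Rightarrow> 'a::euclidean_space"
  assumes phic: "continuous_on {-1..t} \<phi>" and hc: "continuous_on UNIV h"
    and t: "-1 \<le> t" "t \<le> 1"
    and bd: "\<And>q. q \<in> {-1..t} \<Longrightarrow> norm (\<phi> q) \<le> G * \<bar>r q\<bar>" and G: "0 \<le> G"
  shows "norm (integral {-1..t} (\<lambda>s. x1 + integral {-1..s} (\<lambda>q. \<phi> q + h q)))
     \<le> norm x1 * (t + 1) + integral {-1..1} (\<lambda>s. integral {-1..s} (\<lambda>q. norm (h q)))
        + max 0 (t + \<epsilon>) * (C * G)"
proof -
  have hc': "continuous_on S h" for S using hc continuous_on_subset by blast
  have hnc: "continuous_on S (\<lambda>q. norm (h q))" for S using hc' by (intro continuous_intros)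
  have i1: "integral {-1..s} (\<lambda>q. \<phi> q + h q) = integral {-1..s} \<phi> + integral {-1..s} h"
    if "s \<in> {-1..t}" for s
    using that phic hc' by (intro integral_add cont_int[where a="-1" and b=t]) auto
  have c1: "continuous_on {-1..t} (\<lambda>s. integral {-1..s} \<phi>)" using ind_cont[OF phic] .
  have c2: "continuous_on {-1..t} (\<lambda>s. integral {-1..s} h)" using ind_cont[OF hc'] .
  have c3: "continuous_on {-1..1} (\<lambda>s. integral {-1..s} (\<lambda>q. norm (h q)))" using ind_cont[OF hnc] .
  have "integral {-1..t} (\<lambda>s. x1 + integral {-1..s} (\<lambda>q. \<phi> q + h q))
      = integral {-1..t} (\<lambda>s. x1 + (integral {-1..s} \<phi> + integral {-1..s} h))"
    using i1 by (intro integral_cong) auto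
  also have "\<dots> = integral {-1..t} (\<lambda>s. x1) + (integral {-1..t} (\<lambda>s. integral {-1..s} \<phi>)
        + integral {-1..t} (\<lambda>s. integral {-1..s} h))"
    using c1 c2 by (subst Henstock_Kurzweil_Integration.integral_add,
        auto intro!: integrable_continuous_real continuous_intros Henstock_Kurzweil_Integration.integral_add)
  finally have eq: "integral {-1..t} (\<lambda>s. x1 + integral {-1..s} (\<lambda>q. \<phi> q + h q))
      = (t + 1) *\<^sub>R x1 + (integral {-1..t} (\<lambda>s. integral {-1..s} \<phi>)
        + integral {-1..t} (\<lambda>s. integral {-1..s} h))" using t by (simp add: content_real)
  have n1: "norm ((t + 1) *\<^sub>R x1) = norm x1 * (t + 1)" using t by simp
  have n2: "norm (integral {-1..t} (\<lambda>s. integral {-1..s} \<phi>)) \<le> max 0 (t + \<epsilon>) * (C * G)"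
    by (rule est[OF phic t(1) bd G])
  have "norm (integral {-1..t} (\<lambda>s. integral {-1..s} h))
      \<le> integral {-1..t} (\<lambda>s. integral {-1..s} (\<lambda>q. norm (h q)))"
  proof (rule integral_norm_bound_integral)
    show "(\<lambda>s. integral {-1..s} h) integrable_on {-1..t}" using c2 integrable_continuous_real by blast
    show "(\<lambda>s. integral {-1..s} (\<lambda>q. norm (h q))) integrable_on {-1..t}"
      using c3 t by (intro cont_int) auto
    show "norm (integral {-1..s} h) \<le> integral {-1..s} (\<lambda>q. norm (h q))" if "s \<in> {-1..t}" for s
      using hc' hnc by (intro integral_norm_bound_integral integrable_continuous_real) auto
  qed
  also have "\<dots> \<le> integral {-1..1} (\<lambda>s. integral {-1..s} (\<lambda>q. norm (h q)))"
  proof (rule integral_subset_le)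
    show "{-1..t} \<subseteq> {-1..1::real}" using t by auto
    show "(\<lambda>s. integral {-1..s} (\<lambda>q. norm (h q))) integrable_on {-1..t}"
      using c3 t by (intro cont_int) auto
    show "(\<lambda>s. integral {-1..s} (\<lambda>q. norm (h q))) integrable_on {-1..1}"
      using c3 integrable_continuous_real by blast
    show "\<forall>x\<in>{-1..1}. 0 \<le> integral {-1..x} (\<lambda>q. norm (h q))"
      using hnc by (auto intro!: integral_nonneg integrable_continuous_real)
  qed
  finally have n3: "norm (integral {-1..t} (\<lambda>s. integral {-1..s} h))
      \<le> integral {-1..1} (\<lambda>s. integral {-1..s} (\<lambda>q. norm (h q)))" .
  have "norm ((t + 1) *\<^sub>R x1 + (integral {-1..t} (\<lambda>s. integral {-1..s} \<phi>)
        + integral {-1..t} (\<lambda>s. integral {-1..s} h))) \<le> norm ((t + 1) *\<^sub>R x1) + (norm (integral {-1..t} (\<lambda>s. integral {-1..s} \<phi>))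
        + norm (integral {-1..t} (\<lambda>s. integral {-1..s} h)))"
    by (meson add_left_mono norm_triangle_ineq order_trans)
  then show ?thesis unfolding eq using n1 n2 n3 by linarith
qed

lemma Fop_cont:
  fixes f :: "'a::euclidean_space \<Rightarrow> 'a"
  assumes fc: "continuous_on UNIV f" and hc: "continuous_on UNIV h" and zc: "continuous_on {-1..T} z"
  shows "continuous_on {-1..T} (Fop r f h x0 x1 z)"
proof -
  have kc: "continuous_on {-1..T} (\<lambda>q. r q *\<^sub>R f (z q) + h q)"
    using r_cont fc hc zc
    by (intro continuous_intros continuous_on_compose2[OF fc zc]) (auto intro: continuous_on_subset)
  show ?thesis unfolding Fop_def
    by (intro continuous_intros ind_cont kc)
qed

lemma Fop_diff:
  fixes f :: "'a::euclidean_space \<Rightarrow> 'a"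
  assumes fc: "continuous_on UNIV f" and hc: "continuous_on UNIV h"
    and zc: "continuous_on {-1..t} z" and wc: "continuous_on {-1..t} w" and t: "-1 \<le> t"
  shows "Fop r f h x0 x1 z t - Fop r f h x0 x1 w t
     = integral {-1..t} (\<lambda>s. integral {-1..s} (\<lambda>q. r q *\<^sub>R (f (z q) - f (w q))))"
proof -
  have kc: "continuous_on {-1..t} (\<lambda>q. r q *\<^sub>R f (z q) + h q)" if "continuous_on {-1..t} z" for z
    using r_cont fc hc that
    by (intro continuous_intros continuous_on_compose2[OF fc that]) (auto intro: continuous_on_subset)
  have i1: "(\<lambda>s. x1 + integral {-1..s} (\<lambda>q. r q *\<^sub>R f (z q) + h q)) integrable_on {-1..t}"
    if "continuous_on {-1..t} z" for z
    by (intro integrable_continuous_real continuous_intros ind_cont kc that)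
  have "Fop r f h x0 x1 z t - Fop r f h x0 x1 w t
     = integral {-1..t} (\<lambda>s. x1 + integral {-1..s} (\<lambda>q. r q *\<^sub>R f (z q) + h q))
       - integral {-1..t} (\<lambda>s. x1 + integral {-1..s} (\<lambda>q. r q *\<^sub>R f (w q) + h q))"
    unfolding Fop_def by simp
  also have "\<dots> = integral {-1..t} (\<lambda>s. (x1 + integral {-1..s} (\<lambda>q. r q *\<^sub>R f (z q) + h q))
         - (x1 + integral {-1..s} (\<lambda>q. r q *\<^sub>R f (w q) + h q)))"
    by (rule Henstock_Kurzweil_Integration.integral_diff[symmetric, OF i1[OF zc] i1[OF wc]])
  also have "\<dots> = integral {-1..t} (\<lambda>s. integral {-1..s} (\<lambda>q. r q *\<^sub>R (f (z q) - f (w q))))"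
  proof (rule integral_cong)
    fix s assume s: "s \<in> {-1..t}"
    have "(x1 + integral {-1..s} (\<lambda>q. r q *\<^sub>R f (z q) + h q))
         - (x1 + integral {-1..s} (\<lambda>q. r q *\<^sub>R f (w q) + h q))
        = integral {-1..s} (\<lambda>q. r q *\<^sub>R f (z q) + h q) - integral {-1..s} (\<lambda>q. r q *\<^sub>R f (w q) + h q)"
      by simp
    also have "\<dots> = integral {-1..s} (\<lambda>q. (r q *\<^sub>R f (z q) + h q) - (r q *\<^sub>R f (w q) + h q))"
      using s kc[OF zc] kc[OF wc]
      by (intro Henstock_Kurzweil_Integration.integral_diff[symmetric] cont_int[where a="-1" and b=t]) auto
    also have "\<dots> = integral {-1..s} (\<lambda>q. r q *\<^sub>R (f (z q) - f (w q)))"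
      by (simp add: algebra_simps)
    finally show "(x1 + integral {-1..s} (\<lambda>q. r q *\<^sub>R f (z q) + h q))
         - (x1 + integral {-1..s} (\<lambda>q. r q *\<^sub>R f (w q) + h q))
        = integral {-1..s} (\<lambda>q. r q *\<^sub>R (f (z q) - f (w q)))" .
  qed
  finally show ?thesis .
qed

lemma Fop_contr:
  fixes f :: "'a::euclidean_space \<Rightarrow> 'a"
  assumes fc: "continuous_on UNIV f" and hc: "continuous_on UNIV h"
    and zc: "continuous_on {-1..t} z" and wc: "continuous_on {-1..t} w" and t: "-1 \<le> t"
    and lip: "\<And>a b. norm (f a - f b) \<le> L * norm (a - b)" and L: "0 \<le> L"
    and D: "\<And>q. q \<in> {-1..t} \<Longrightarrow> norm (z q - w q) \<le> D" and D0: "0 \<le> D"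
  shows "norm (Fop r f h x0 x1 z t - Fop r f h x0 x1 w t) \<le> max 0 (t + \<epsilon>) * (C * (L * D))"
  unfolding Fop_diff[OF fc hc zc wc t]
proof (rule est[OF _ t])
  show "continuous_on {-1..t} (\<lambda>q. r q *\<^sub>R (f (z q) - f (w q)))"
    using r_cont by (intro continuous_intros continuous_on_compose2[OF fc zc] continuous_on_compose2[OF fc wc])
       (auto intro: continuous_on_subset)
  show "0 \<le> L * D" using L D0 by simp
  fix q assume q: "q \<in> {-1..t}"
  have "norm (f (z q) - f (w q)) \<le> L * D"
    using lip[of "z q" "w q"] D[OF q] L by (meson mult_left_mono order_trans)
  then show "norm (r q *\<^sub>R (f (z q) - f (w q))) \<le> L * D * \<bar>r q\<bar>"
    by (simp add: mult.commute mult_left_mono)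
qed

lemma Fop_unique:
  fixes f :: "'a::euclidean_space \<Rightarrow> 'a"
  assumes fc: "continuous_on UNIV f" and hc: "continuous_on UNIV h"
    and zc: "continuous_on {-1..T} z" and wc: "continuous_on {-1..T} w" and T: "-1 \<le> T"
    and lip: "\<And>a b. norm (f a - f b) \<le> L * norm (a - b)" and L: "0 \<le> L"
    and small: "max 0 (T + \<epsilon>) * (C * L) \<le> 1/2"
    and zf: "\<And>t. t \<in> {-1..T} \<Longrightarrow> z t = Fop r f h x0 x1 z t"
    and wf: "\<And>t. t \<in> {-1..T} \<Longrightarrow> w t = Fop r f h x0 x1 w t"
  shows "\<forall>t\<in>{-1..T}. z t = w t"
proof -
  have dc: "continuous_on {-1..T} (\<lambda>t. norm (z t - w t))"
    using zc wc by (intro continuous_intros)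
  obtain t0 where t0: "t0 \<in> {-1..T}" and mx: "\<And>t. t \<in> {-1..T} \<Longrightarrow> norm (z t - w t) \<le> norm (z t0 - w t0)"
    using continuous_attains_sup[OF compact_Icc _ dc] T by auto
  define D where "D = norm (z t0 - w t0)"
  have D0: "0 \<le> D" unfolding D_def by simp
  have le: "norm (z t - w t) \<le> D / 2" if t: "t \<in> {-1..T}" for t
  proof -
    have zc': "continuous_on {-1..t} z" "continuous_on {-1..t} w"
      using zc wc t by (auto intro: continuous_on_subset)
    have "norm (z t - w t) = norm (Fop r f h x0 x1 z t - Fop r f h x0 x1 w t)"
      using zf[OF t] wf[OF t] by simp
    also have "\<dots> \<le> max 0 (t + \<epsilon>) * (C * (L * D))"
      by (rule Fop_contr[OF fc hc zc'(1) zc'(2) _ lip L _ D0]) (use t mx in \<open>auto simp: D_def\<close>)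
    also have "\<dots> \<le> max 0 (T + \<epsilon>) * (C * (L * D))"
      using t C_nn L D0 by (intro mult_right_mono) auto
    also have "\<dots> = max 0 (T + \<epsilon>) * (C * L) * D" by (simp add: mult.assoc)
    also have "\<dots> \<le> 1/2 * D" using small D0 by (rule mult_right_mono)
    finally show ?thesis by simp
  qed
  have "D \<le> D / 2" using le[OF t0] unfolding D_def .
  then have "D = 0" using D0 by simp
  then show ?thesis using mx unfolding D_def by auto
qed

lemma Fop_exists:
  fixes f :: "'a::euclidean_space \<Rightarrow> 'a"
  assumes fc: "continuous_on UNIV f" and hc: "continuous_on UNIV h" and T: "-1 \<le> T"
    and lip: "\<And>a b. norm (f a - f b) \<le> L * norm (a - b)" and L: "0 \<le> L"
    and small: "max 0 (T + \<epsilon>) * (C * L) \<le> 1/2"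
  shows "\<exists>z. continuous_on UNIV z \<and> (\<forall>t\<in>{-1..T}. z t = Fop r f h x0 x1 z t)"
proof -
  define cl where "cl t = max (-1) (min T t)" for t :: real
  have clc: "continuous_on UNIV cl" unfolding cl_def by (intro continuous_intros)
  have clin: "cl t \<in> {-1..T}" for t using T unfolding cl_def by auto
  have clid: "cl t = t" if "t \<in> {-1..T}" for t using that unfolding cl_def by auto
  define F where "F u = (\<lambda>t. Fop r f h x0 x1 (apply_bcontfun u) (cl t))" for u :: "real \<Rightarrow>\<^sub>C 'a"
  have mem: "F u \<in> bcontfun" for u
  proof -
    have fc': "continuous_on {-1..T} (Fop r f h x0 x1 (apply_bcontfun u))"
      by (rule Fop_cont[OF fc hc]) auto
    have "continuous_on UNIV (F u)" unfolding F_def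
      by (rule continuous_on_compose2[OF fc' clc]) (use clin in auto)
    moreover have "bounded (range (F u))"
    proof (rule bounded_subset)
      show "bounded (Fop r f h x0 x1 (apply_bcontfun u) ` {-1..T})"
        by (intro compact_imp_bounded compact_continuous_image fc') auto
      show "range (F u) \<subseteq> Fop r f h x0 x1 (apply_bcontfun u) ` {-1..T}"
        unfolding F_def using clin by auto
    qed
    ultimately show ?thesis unfolding bcontfun_def by simp
  qed
  define P where "P u = Bcontfun (F u)" for u
  have Papp: "apply_bcontfun (P u) t = Fop r f h x0 x1 (apply_bcontfun u) (cl t)" for u t
    unfolding P_def using Bcontfun_inverse[OF mem] by (simp add: F_def)
  have contr: "dist (P u) (P w) \<le> 1/2 * dist u w" for u w
  proof (rule dist_bound)
    fix t
    define D where "D = dist u w"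
    have D0: "0 \<le> D" unfolding D_def by simp
    have "dist (apply_bcontfun (P u) t) (apply_bcontfun (P w) t)
        = norm (Fop r f h x0 x1 (apply_bcontfun u) (cl t) - Fop r f h x0 x1 (apply_bcontfun w) (cl t))"
      unfolding Papp dist_norm ..
    also have "\<dots> \<le> max 0 (cl t + \<epsilon>) * (C * (L * D))"
      by (rule Fop_contr[OF fc hc _ _ _ lip L _ D0])
         (use clin[of t] in \<open>auto simp: D_def dist_norm[symmetric] dist_bounded\<close>)
    also have "\<dots> \<le> max 0 (T + \<epsilon>) * (C * (L * D))"
      using clin[of t] C_nn L D0 by (intro mult_right_mono) auto
    also have "\<dots> = max 0 (T + \<epsilon>) * (C * L) * D" by (simp add: mult.assoc)
    also have "\<dots> \<le> 1/2 * D" using small D0 by (rule mult_right_mono)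
    finally show "dist (apply_bcontfun (P u) t) (apply_bcontfun (P w) t) \<le> 1/2 * dist u w"
      unfolding D_def .
  qed
  obtain z where z: "P z = z" using banach_fix_type[of "1/2" P] contr by auto
  show ?thesis
  proof (intro exI conjI ballI)
    show "continuous_on UNIV (apply_bcontfun z)" by simp
    fix t assume t: "t \<in> {-1..T}"
    have "apply_bcontfun z t = apply_bcontfun (P z) t" using z by simp
    also have "\<dots> = Fop r f h x0 x1 (apply_bcontfun z) t" unfolding Papp clid[OF t] ..
    finally show "apply_bcontfun z t = Fop r f h x0 x1 (apply_bcontfun z) t" .
  qed
qed

end

lemma sol_cont:
  assumes sol: "ivp_sol g r h x0 x1 {-1..T} y w"
  shows "continuous_on {-1..T} y" "continuous_on {-1..T} w"
  using sol unfolding ivp_sol_def continuous_on_eq_continuous_within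
  by (auto intro: has_vector_derivative_continuous)

lemma sol_rep:
  fixes g :: "'a::euclidean_space \<Rightarrow> 'a"
  assumes sol: "ivp_sol g r h x0 x1 {-1..T} y w" and t: "t \<in> {-1..T}"
  shows "w t = x1 + integral {-1..t} (\<lambda>q. r q *\<^sub>R g (y q) + h q)"
    and "y t = Fop r g h x0 x1 y t"
proof -
  have y0: "y (-1) = x0" and w0: "w (-1) = x1"
    and D1: "\<And>s. s \<in> {-1..T} \<Longrightarrow> (y has_vector_derivative w s) (at s within {-1..T})"
    and D2: "\<And>s. s \<in> {-1..T} \<Longrightarrow> (w has_vector_derivative (r s *\<^sub>R g (y s) + h s)) (at s within {-1..T})"
    using sol unfolding ivp_sol_def by auto
  have wrep: "w s = x1 + integral {-1..s} (\<lambda>q. r q *\<^sub>R g (y q) + h q)" if s: "s \<in> {-1..T}" for s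
  proof -
    have "((\<lambda>q. r q *\<^sub>R g (y q) + h q) has_integral (w s - w (-1))) {-1..s}"
      using s by (intro fundamental_theorem_of_calculus)
        (auto intro: has_vector_derivative_within_subset[OF D2])
    then show ?thesis using w0 by (simp add: integral_unique)
  qed
  have yrep: "y s = x0 + integral {-1..s} w" if s: "s \<in> {-1..T}" for s
  proof -
    have "(w has_integral (y s - y (-1))) {-1..s}"
      using s by (intro fundamental_theorem_of_calculus)
        (auto intro: has_vector_derivative_within_subset[OF D1])
    then show ?thesis using y0 by (simp add: integral_unique)
  qed
  show "w t = x1 + integral {-1..t} (\<lambda>q. r q *\<^sub>R g (y q) + h q)" using wrep[OF t] .
  have "integral {-1..t} w = integral {-1..t} (\<lambda>s. x1 + integral {-1..s} (\<lambda>q. r q *\<^sub>R g (y q) + h q))"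
    using t by (intro integral_cong wrep) auto
  then show "y t = Fop r g h x0 x1 y t" unfolding Fop_def using yrep[OF t] by simp
qed


lemma ftc_norm:
  fixes F :: "real \<Rightarrow> 'a::euclidean_space"
  assumes ab: "a \<le> b" and D: "\<And>q. q \<in> {a..b} \<Longrightarrow> (F has_vector_derivative F' q) (at q)"
    and gi: "g integrable_on {a..b}" and le: "\<And>q. q \<in> {a..b} \<Longrightarrow> norm (F' q) \<le> g q"
  shows "norm (F b - F a) \<le> integral {a..b} g"
proof -
  have hi: "(F' has_integral (F b - F a)) {a..b}"
    using ab D by (intro fundamental_theorem_of_calculus) (auto intro: has_vector_derivative_at_within)
  then have "F b - F a = integral {a..b} F'" by (simp add: integral_unique)
  also have "norm \<dots> \<le> integral {a..b} g"
    using hi gi le by (intro integral_norm_bound_integral) auto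
  finally show ?thesis .
qed

lemma zero_deriv_eq:
  fixes d :: "real \<Rightarrow> 'a::euclidean_space"
  assumes S: "convex S" and a: "a \<in> S" and D: "\<And>t. t \<in> S \<Longrightarrow> (d has_vector_derivative 0) (at t within S)"
    and d0: "d a = 0"
  shows "\<forall>t\<in>S. d t = 0"
proof -
  have "\<exists>c. \<forall>x\<in>S. d x = c"
    using S by (rule has_derivative_zero_constant) (use D in \<open>auto simp: has_vector_derivative_def\<close>)
  then show ?thesis using a d0 by metis
qed

lemma sol_restrict:
  assumes "ivp_sol g r h x0 x1 UNIV y w"
  shows "ivp_sol g r h x0 x1 J y w"
  using assms unfolding ivp_sol_def by (auto intro: has_vector_derivative_at_within)

locale ctx2 = rctx r \<epsilon> C
  for r :: "real \<Rightarrow> real" and \<epsilon> C :: real +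
  fixes g f :: "'a::euclidean_space \<Rightarrow> 'a" and h :: "real \<Rightarrow> 'a" and x0 x1 :: 'a
    and L G M R \<alpha> :: real
  assumes gc: "continuous_on UNIV g" and fc: "continuous_on UNIV f" and hc: "continuous_on UNIV h"
    and f_lip: "\<And>a b. norm (f a - f b) \<le> L * norm (a - b)" and L0: "0 \<le> L"
    and G0: "0 \<le> G" and f_bd: "\<And>y. norm (f y) \<le> G"
    and g_bd: "\<And>y. y \<in> cball x0 R \<Longrightarrow> norm (g y) \<le> G"
    and fg: "\<And>y. y \<in> cball x0 R \<Longrightarrow> f y = g y"
    and M_def: "M = integral {-1..1} (\<lambda>s. integral {-1..s} (\<lambda>q. norm (h q)))"
    and R0: "0 \<le> R"
    and keyle: "\<And>t. -1 \<le> t \<Longrightarrow> t \<le> \<alpha> - \<epsilon> \<Longrightarrow> norm x1 * (t + 1) + M + max 0 (t + \<epsilon>) * (C * G) \<le> R"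
    and keylt: "\<And>t. -1 \<le> t \<Longrightarrow> t < \<alpha> - \<epsilon> \<Longrightarrow> norm x1 * (t + 1) + M + max 0 (t + \<epsilon>) * (C * G) < R"
    and small: "\<alpha> * (C * L) \<le> 1/2" and al0: "0 < \<alpha>" and al1: "\<alpha> \<le> 1"
begin

lemma in_ball_est:
  assumes phic: "continuous_on {-1..t} \<phi>" and t: "-1 \<le> t" "t \<le> \<alpha> - \<epsilon>"
    and bd: "\<And>q. q \<in> {-1..t} \<Longrightarrow> norm (\<phi> q) \<le> G * \<bar>r q\<bar>"
  shows "norm (integral {-1..t} (\<lambda>s. x1 + integral {-1..s} (\<lambda>q. \<phi> q + h q)))
      \<le> norm x1 * (t + 1) + M + max 0 (t + \<epsilon>) * (C * G)"
  unfolding M_def using al1 eps_pos t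
  by (intro bound[OF phic hc _ _ bd G0]) auto

lemma sol_stays:
  assumes sol: "ivp_sol g r h x0 x1 {-1..\<alpha> - \<epsilon>} y w"
  shows "\<forall>t\<in>{-1..\<alpha> - \<epsilon>}. y t \<in> cball x0 R"
proof (rule ccontr)
  define T where "T = \<alpha> - \<epsilon>"
  define B where "B = cball x0 R"
  define E where "E = {t \<in> {-1..T}. y t \<notin> B}"
  assume "\<not> ?thesis"
  then have Ene: "E \<noteq> {}" unfolding E_def B_def T_def by auto
  have Ebd: "bdd_below E" unfolding E_def by (auto intro: bdd_belowI[of _ "-1"])
  define ts where "ts = Inf E"
  have yc: "continuous_on {-1..T} y" using sol_cont[OF sol] unfolding T_def by simp
  have y0: "y (-1) = x0" using sol unfolding ivp_sol_def by simp
  have lower: "ts \<le> e" if "e \<in> E" for e unfolding ts_def using cInf_lower[OF that Ebd] .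
  have ts1: "-1 \<le> ts" unfolding ts_def using Ene by (intro cInf_greatest) (auto simp: E_def)
  obtain e0 where e0: "e0 \<in> E" using Ene by auto
  have tsT: "ts \<le> T" using lower[OF e0] e0 unfolding E_def by auto
  have before: "y s \<in> B" if "-1 \<le> s" "s < ts" for s
    using lower[of s] that tsT unfolding E_def by fastforce
  have upto: "y s \<in> B" if s: "s \<in> {-1..ts}" for s
  proof (cases "ts = -1")
    case True
    then have "s = -1" using s by auto
    then show ?thesis using y0 R0 unfolding B_def by simp
  next
    case False
    then have lt: "-1 < ts" using ts1 by simp
    have "y ` closure {-1..<ts} \<subseteq> B"
    proof (rule image_closure_subset)
      show "continuous_on (closure {-1..<ts}) y"
        using yc lt tsT by (auto intro: continuous_on_subset)
      show "closed B" unfolding B_def by simp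
      show "y ` {-1..<ts} \<subseteq> B" using before by auto
    qed
    then show ?thesis using lt s by auto
  qed
  have tsnE: "ts \<notin> E" using upto ts1 unfolding E_def by auto
  have tsltT: "ts < T"
  proof (rule ccontr)
    assume "\<not> ts < T"
    then have "ts = T" using tsT by simp
    then have "e0 = ts" using lower[OF e0] e0 unfolding E_def by auto
    then show False using e0 tsnE by simp
  qed
  have strict: "norm (y ts - x0) < R"
  proof -
    have "y ts = Fop r g h x0 x1 y ts" using sol_rep(2)[OF sol] ts1 tsT unfolding T_def by auto
    then have "y ts - x0 = integral {-1..ts} (\<lambda>s. x1 + integral {-1..s} (\<lambda>q. r q *\<^sub>R g (y q) + h q))"
      unfolding Fop_def by simp
    moreover have "norm (integral {-1..ts} (\<lambda>s. x1 + integral {-1..s} (\<lambda>q. r q *\<^sub>R g (y q) + h q)))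
      \<le> norm x1 * (ts + 1) + M + max 0 (ts + \<epsilon>) * (C * G)"
    proof (rule in_ball_est)
      show "continuous_on {-1..ts} (\<lambda>q. r q *\<^sub>R g (y q))"
        using r_cont yc tsT by (intro continuous_intros continuous_on_compose2[OF gc])
          (auto intro: continuous_on_subset)
      show "-1 \<le> ts" by (rule ts1)
      show "ts \<le> \<alpha> - \<epsilon>" using tsT unfolding T_def by simp
      fix q assume q: "q \<in> {-1..ts}"
      have "norm (g (y q)) \<le> G" using g_bd upto[OF q] unfolding B_def by simp
      then show "norm (r q *\<^sub>R g (y q)) \<le> G * \<bar>r q\<bar>"
        using mult_right_mono[OF _ abs_ge_zero[of "r q"]] by (simp add: mult.commute[of "\<bar>r q\<bar>"])
    qed
    moreover have "norm x1 * (ts + 1) + M + max 0 (ts + \<epsilon>) * (C * G) < R"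
      using keylt ts1 tsltT unfolding T_def by simp
    ultimately show ?thesis by simp
  qed
  have "continuous (at ts within {-1..T}) y"
    using yc ts1 tsT unfolding continuous_on_eq_continuous_within by auto
  moreover have "y ts \<in> ball x0 R" using strict by (simp add: dist_norm norm_minus_commute)
  ultimately have "\<forall>\<^sub>F s in at ts within {-1..T}. y s \<in> ball x0 R"
    unfolding continuous_within by (intro topological_tendstoD) auto
  then obtain d where d: "d > 0" and dd: "\<And>s. s \<in> {-1..T} \<Longrightarrow> s \<noteq> ts \<Longrightarrow> dist s ts < d \<Longrightarrow> y s \<in> ball x0 R"
    unfolding eventually_at by auto
  have "ts + min d (T - ts) \<le> ts"
  proof -
    have "ts + min d (T - ts) \<le> e" if e: "e \<in> E" for e
    proof (rule ccontr)
      assume "\<not> ts + min d (T - ts) \<le> e"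
      then have "e < ts + d" by simp
      moreover have "ts \<le> e" using lower[OF e] .
      moreover have "e \<noteq> ts" using e tsnE by auto
      ultimately have "y e \<in> ball x0 R" using dd[of e] e unfolding E_def dist_real_def by auto
      then show False using e unfolding E_def B_def by auto
    qed
    then have "ts + min d (T - ts) \<le> Inf E" using Ene by (intro cInf_greatest) auto
    then show "ts + min d (T - ts) \<le> ts" by (simp only: ts_def)
  qed
  then show False using d tsltT by simp
qed


lemma fix_f:
  assumes sol: "ivp_sol g r h x0 x1 {-1..\<alpha> - \<epsilon>} y w" and t: "t \<in> {-1..\<alpha> - \<epsilon>}"
  shows "y t = Fop r f h x0 x1 y t"
proof -
  have st: "y q \<in> cball x0 R" if "q \<in> {-1..\<alpha> - \<epsilon>}" for q using sol_stays[OF sol] that by auto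
  have "y t = Fop r g h x0 x1 y t" using sol_rep(2)[OF sol t] .
  also have "\<dots> = Fop r f h x0 x1 y t"
    unfolding Fop_def using t
    by (intro arg_cong2[where f="(+)"] refl integral_cong arg_cong2[where f="(+)"] refl)
       (auto simp: fg[OF st])
  finally show ?thesis .
qed

lemma uniq1:
  assumes s1: "ivp_sol g r h x0 x1 {-1..\<alpha> - \<epsilon>} y w"
    and s2: "ivp_sol g r h x0 x1 {-1..\<alpha> - \<epsilon>} y2 w2"
  shows "\<forall>t\<in>{-1..\<alpha> - \<epsilon>}. y t = y2 t \<and> w t = w2 t"
proof (cases "-1 \<le> \<alpha> - \<epsilon>")
  case False
  then show ?thesis by auto
next
  case True
  have sm: "max 0 (\<alpha> - \<epsilon> + \<epsilon>) * (C * L) \<le> 1/2" using small al0 by simp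
  have yy: "\<forall>t\<in>{-1..\<alpha> - \<epsilon>}. y t = y2 t"
    by (rule Fop_unique[OF fc hc sol_cont(1)[OF s1] sol_cont(1)[OF s2] True f_lip L0 sm])
       (auto intro: fix_f[OF s1] fix_f[OF s2])
  show ?thesis
  proof
    fix t assume t: "t \<in> {-1..\<alpha> - \<epsilon>}"
    have "w t = x1 + integral {-1..t} (\<lambda>q. r q *\<^sub>R g (y q) + h q)" using sol_rep(1)[OF s1 t] .
    also have "\<dots> = x1 + integral {-1..t} (\<lambda>q. r q *\<^sub>R g (y2 q) + h q)"
      using t yy by (intro arg_cong2[where f="(+)"] refl integral_cong) auto
    also have "\<dots> = w2 t" using sol_rep(1)[OF s2 t] by simp
    finally show "y t = y2 t \<and> w t = w2 t" using yy t by simp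
  qed
qed

lemma exists1:
  assumes T: "-1 \<le> \<alpha> - \<epsilon>"
  shows "\<exists>X V. X (-1) = x0 \<and> V (-1) = x1 \<and> (\<forall>t. (X has_vector_derivative V t) (at t)) \<and>
     (\<forall>t. (t \<in> {-1..\<alpha> - \<epsilon>} \<or> r t = 0) \<longrightarrow> (V has_vector_derivative (r t *\<^sub>R g (X t) + h t)) (at t))"
proof -
  define T where "T = \<alpha> - \<epsilon>"
  have sm: "max 0 (T + \<epsilon>) * (C * L) \<le> 1/2" using small al0 by (simp add: T_def)
  obtain z where zc: "continuous_on UNIV z" and zf: "\<And>t. t \<in> {-1..T} \<Longrightarrow> z t = Fop r f h x0 x1 z t"
    using Fop_exists[OF fc hc _ f_lip L0 sm] T unfolding T_def by blast
  have zB: "z t \<in> cball x0 R" if t: "t \<in> {-1..T}" for t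
  proof -
    have "z t - x0 = integral {-1..t} (\<lambda>s. x1 + integral {-1..s} (\<lambda>q. r q *\<^sub>R f (z q) + h q))"
      using zf[OF t] unfolding Fop_def by simp
    moreover have "norm (integral {-1..t} (\<lambda>s. x1 + integral {-1..s} (\<lambda>q. r q *\<^sub>R f (z q) + h q)))
      \<le> norm x1 * (t + 1) + M + max 0 (t + \<epsilon>) * (C * G)"
    proof (rule in_ball_est)
      show "continuous_on {-1..t} (\<lambda>q. r q *\<^sub>R f (z q))"
        using r_cont zc by (intro continuous_intros continuous_on_compose2[OF fc])
          (auto intro: continuous_on_subset)
      show "-1 \<le> t" "t \<le> \<alpha> - \<epsilon>" using t unfolding T_def by auto
      fix q
      have "norm (f (z q)) \<le> G" by (rule f_bd)
      then show "norm (r q *\<^sub>R f (z q)) \<le> G * \<bar>r q\<bar>"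
        using mult_right_mono[OF _ abs_ge_zero[of "r q"]] by (simp add: mult.commute[of "\<bar>r q\<bar>"])
    qed
    moreover have "norm x1 * (t + 1) + M + max 0 (t + \<epsilon>) * (C * G) \<le> R"
      using keyle t unfolding T_def by simp
    ultimately have "norm (z t - x0) \<le> R" by simp
    then show ?thesis by (simp add: dist_norm norm_minus_commute)
  qed
  define cl where "cl t = max (-1) (min T t)" for t :: real
  have clc: "continuous_on UNIV cl" unfolding cl_def by (intro continuous_intros)
  have clid: "cl t = t" if "t \<in> {-1..T}" for t using that unfolding cl_def by auto
  define k where "k t = r t *\<^sub>R g (z (cl t)) + h t" for t
  have kc: "continuous_on UNIV k" unfolding k_def
    using r_cont hc by (intro continuous_intros continuous_on_compose2[OF gc] continuous_on_compose2[OF zc clc]) auto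
  define V where "V t = x1 + sint k t" for t
  define X where "X t = x0 + sint V t" for t
  have dV: "(V has_vector_derivative k t) (at t)" for t
    unfolding V_def using sint_deriv[OF kc, of t] by (auto intro!: derivative_eq_intros)
  have Vc: "continuous_on UNIV V"
    using dV by (meson continuous_at_imp_continuous_on has_vector_derivative_continuous)
  have dX: "(X has_vector_derivative V t) (at t)" for t
    unfolding X_def using sint_deriv[OF Vc, of t] by (auto intro!: derivative_eq_intros)
  have kf: "k q = r q *\<^sub>R f (z q) + h q" if "q \<in> {-1..T}" for q
    unfolding k_def using clid[OF that] fg[OF zB[OF that]] by simp
  have Xz: "X t = z t" if t: "t \<in> {-1..T}" for t
  proof -
    have "X t = x0 + integral {-1..t} (\<lambda>s. x1 + integral {-1..s} k)"
      using t unfolding X_def V_def sint_def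
      by (auto intro!: integral_cong)
    also have "\<dots> = Fop r f h x0 x1 z t"
      unfolding Fop_def using t
      by (intro arg_cong2[where f="(+)"] refl integral_cong) (auto simp: kf)
    finally show ?thesis using zf[OF t] by simp
  qed
  show ?thesis
  proof (intro exI conjI allI impI)
    show "X (-1) = x0" unfolding X_def sint_def by simp
    show "V (-1) = x1" unfolding V_def sint_def by simp
    fix t
    show "(X has_vector_derivative V t) (at t)" by (rule dX)
    assume "t \<in> {-1..\<alpha> - \<epsilon>} \<or> r t = 0"
    then have "k t = r t *\<^sub>R g (X t) + h t"
    proof
      assume t: "t \<in> {-1..\<alpha> - \<epsilon>}"
      then show ?thesis unfolding k_def using Xz[of t] clid[of t] by (simp add: T_def)
    next
      assume "r t = 0" then show ?thesis unfolding k_def by simp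
    qed
    then show "(V has_vector_derivative (r t *\<^sub>R g (X t) + h t)) (at t)" using dV[of t] by simp
  qed
qed


lemma part1_exists: "\<exists>x v. ivp_sol g r h x0 x1 {-1..\<alpha> - \<epsilon>} x v"
proof (cases "-1 \<le> \<alpha> - \<epsilon>")
  case False
  then show ?thesis unfolding ivp_sol_def by (intro exI[of _ "\<lambda>_. x0"] exI[of _ "\<lambda>_. x1"]) auto
next
  case True
  then obtain X V where X0: "X (-1) = x0" and V0: "V (-1) = x1" and dX: "\<And>t. (X has_vector_derivative V t) (at t)"
    and dV: "\<And>t. t \<in> {-1..\<alpha> - \<epsilon>} \<or> r t = 0 \<Longrightarrow> (V has_vector_derivative (r t *\<^sub>R g (X t) + h t)) (at t)"
    using exists1 by blast
  show ?thesis unfolding ivp_sol_def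
    by (intro exI[of _ X] exI[of _ V]) (auto simp: X0 V0 intro: has_vector_derivative_at_within dX dV)
qed

context
  assumes big: "\<epsilon> < \<alpha> - \<epsilon>"
begin

lemma r_out: "t \<notin> {-1..\<alpha> - \<epsilon>} \<Longrightarrow> r t = 0"
  using big eps_le by (intro r_zero) auto

lemma exists_global: "\<exists>x v. ivp_sol g r h x0 x1 UNIV x v"
proof -
  obtain X V where X0: "X (-1) = x0" and V0: "V (-1) = x1" and dX: "\<And>t. (X has_vector_derivative V t) (at t)"
    and dV: "\<And>t. t \<in> {-1..\<alpha> - \<epsilon>} \<or> r t = 0 \<Longrightarrow> (V has_vector_derivative (r t *\<^sub>R g (X t) + h t)) (at t)"
  proof -
    have "-1 \<le> \<alpha> - \<epsilon>" using big eps_pos by simp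
    from exists1[OF this] show ?thesis using that by blast
  qed
  show ?thesis unfolding ivp_sol_def
    by (intro exI[of _ X] exI[of _ V]) (auto simp: X0 V0 intro: dX dV r_out)
qed

lemma uniq_global:
  assumes s1: "ivp_sol g r h x0 x1 UNIV y w" and s2: "ivp_sol g r h x0 x1 UNIV y2 w2"
  shows "y = y2 \<and> w = w2"
proof -
  define T where "T = \<alpha> - \<epsilon>"
  have T1: "-1 \<le> T" using big eps_pos unfolding T_def by simp
  have onJ: "\<forall>t\<in>{-1..T}. y t = y2 t \<and> w t = w2 t"
    unfolding T_def by (rule uniq1[OF sol_restrict[OF s1] sol_restrict[OF s2]])
  have dy: "\<And>t. (y has_vector_derivative w t) (at t)" "\<And>t. (y2 has_vector_derivative w2 t) (at t)"
    using s1 s2 unfolding ivp_sol_def by auto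
  have dw: "\<And>t. (w has_vector_derivative (r t *\<^sub>R g (y t) + h t)) (at t)"
    "\<And>t. (w2 has_vector_derivative (r t *\<^sub>R g (y2 t) + h t)) (at t)"
    using s1 s2 unfolding ivp_sol_def by auto
  have y0: "y (-1) = x0" "y2 (-1) = x0" "w (-1) = x1" "w2 (-1) = x1"
    using s1 s2 unfolding ivp_sol_def by auto
  have side: "\<forall>t\<in>S. y t = y2 t \<and> w t = w2 t"
    if S: "convex S" and a: "a \<in> S" "a \<in> {-1..T}"
      and rz: "\<And>t. t \<in> S \<Longrightarrow> r t *\<^sub>R (g (y t) - g (y2 t)) = 0" for S a
  proof -
    have ww: "\<forall>t\<in>S. w t - w2 t = 0"
    proof (rule zero_deriv_eq[OF S a(1)])
      fix t assume t: "t \<in> S"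
      have "((\<lambda>t. w t - w2 t) has_vector_derivative
          ((r t *\<^sub>R g (y t) + h t) - (r t *\<^sub>R g (y2 t) + h t))) (at t)"
        by (intro derivative_intros dw)
      moreover have "(r t *\<^sub>R g (y t) + h t) - (r t *\<^sub>R g (y2 t) + h t) = 0"
        using rz[OF t] by (simp add: algebra_simps)
      ultimately show "((\<lambda>t. w t - w2 t) has_vector_derivative 0) (at t within S)"
        by (auto intro: has_vector_derivative_at_within)
    next
      show "w a - w2 a = 0" using onJ a by auto
    qed
    have yy: "\<forall>t\<in>S. y t - y2 t = 0"
    proof (rule zero_deriv_eq[OF S a(1)])
      fix t assume t: "t \<in> S"
      have "((\<lambda>t. y t - y2 t) has_vector_derivative (w t - w2 t)) (at t)"
        by (intro derivative_intros dy)
      then show "((\<lambda>t. y t - y2 t) has_vector_derivative 0) (at t within S)"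
        using ww t by (auto intro: has_vector_derivative_at_within)
    next
      show "y a - y2 a = 0" using onJ a by auto
    qed
    show ?thesis using ww yy by auto
  qed
  have right: "\<forall>t\<in>{T..}. y t = y2 t \<and> w t = w2 t"
  proof (rule side[of _ T])
    fix t assume t: "t \<in> {T..}"
    show "r t *\<^sub>R (g (y t) - g (y2 t)) = 0"
    proof (cases "t = T")
      case True then show ?thesis using onJ T1 by auto
    next
      case False then have "r t = 0" using t by (intro r_out) (auto simp: T_def)
      then show ?thesis by simp
    qed
  qed (use T1 in auto)
  have left: "\<forall>t\<in>{..-1}. y t = y2 t \<and> w t = w2 t"
  proof (rule side[of _ "-1"])
    fix t assume t: "t \<in> {..-1::real}"
    have "r t = 0" using t eps_le by (intro r_zero) auto
    then show "r t *\<^sub>R (g (y t) - g (y2 t)) = 0" by simp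
  qed (use T1 in auto)
  have "y t = y2 t \<and> w t = w2 t" for t
    using onJ right left by (cases "t \<le> -1"; cases "t \<ge> T") auto
  then show ?thesis by auto
qed

lemma bound_global:
  assumes s: "ivp_sol g r h x0 x1 UNIV y w" and A: "1 \<le> A"
    and Hb: "\<And>t. t \<in> {-A..A} \<Longrightarrow> norm (h t) \<le> Hb"
  shows "\<forall>t\<in>{-A..A}. norm (w t) \<le> norm x1 + C * G + 2 * A * Hb \<and>
      norm (y t) \<le> norm x0 + 2 * A * (norm x1 + C * G + 2 * A * Hb)"
proof -
  define Bv where "Bv = norm x1 + C * G + 2 * A * Hb"
  have Hb0: "0 \<le> Hb" using Hb[of 0] A by (meson atLeastAtMost_iff neg_le_0_iff_le norm_ge_zero order_trans zero_le_one)
  have st: "y q \<in> cball x0 R" if "q \<in> {-1..\<alpha> - \<epsilon>}" for q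
    using sol_stays[OF sol_restrict[OF s]] that by auto
  have rb: "norm (r q *\<^sub>R g (y q)) \<le> G * \<bar>r q\<bar>" for q
  proof (cases "q \<in> {-1..\<alpha> - \<epsilon>}")
    case True
    then have "norm (g (y q)) \<le> G" using g_bd st by simp
    then show ?thesis using mult_right_mono[OF _ abs_ge_zero[of "r q"]] by (simp add: mult.commute[of "\<bar>r q\<bar>"])
  next
    case False then show ?thesis using r_out by simp
  qed
  have dy: "\<And>t. (y has_vector_derivative w t) (at t)"
    and dw: "\<And>t. (w has_vector_derivative (r t *\<^sub>R g (y t) + h t)) (at t)"
    and y0: "y (-1) = x0" and w0: "w (-1) = x1"
    using s unfolding ivp_sol_def by auto
  have rac: "continuous_on S (\<lambda>q. G * \<bar>r q\<bar> + Hb)" for S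
    using r_cont by (intro continuous_intros) (auto intro: continuous_on_subset)
  have wdiff: "norm (w b - w a) \<le> C * G + 2 * A * Hb" if ab: "a \<le> b" "a \<in> {-A..A}" "b \<in> {-A..A}" for a b
  proof -
    have "norm (w b - w a) \<le> integral {a..b} (\<lambda>q. G * \<bar>r q\<bar> + Hb)"
    proof (rule ftc_norm[OF ab(1) dw])
      show "(\<lambda>q. G * \<bar>r q\<bar> + Hb) integrable_on {a..b}" by (intro integrable_continuous_real rac)
      fix q assume q: "q \<in> {a..b}"
      then have "q \<in> {-A..A}" using ab by auto
      then show "norm (r q *\<^sub>R g (y q) + h q) \<le> G * \<bar>r q\<bar> + Hb"
        using rb[of q] Hb[of q] norm_triangle_ineq[of "r q *\<^sub>R g (y q)" "h q"] by linarith
    qed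
    also have "\<dots> = G * integral {a..b} (\<lambda>q. \<bar>r q\<bar>) + Hb * (b - a)"
    proof -
      have ri: "(\<lambda>q. \<bar>r q\<bar>) integrable_on {a..b}"
        using r_cont by (intro integrable_continuous_real continuous_intros) (auto intro: continuous_on_subset)
      have ri2: "(\<lambda>q. G * \<bar>r q\<bar>) integrable_on {a..b}"
        using r_cont by (intro integrable_continuous_real continuous_intros) (auto intro: continuous_on_subset)
      have "integral {a..b} (\<lambda>q. G * \<bar>r q\<bar> + Hb) = integral {a..b} (\<lambda>q. G * \<bar>r q\<bar>) + integral {a..b} (\<lambda>q. Hb)"
        using ri2 by (intro Henstock_Kurzweil_Integration.integral_add) auto
      then show ?thesis using ab(1) ri by (simp add: content_real mult.commute)
    qed
    also have "\<dots> \<le> G * C + Hb * (2 * A)"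
      using r_int[of a b] G0 Hb0 ab by (intro add_mono mult_left_mono) auto
    finally show ?thesis by (simp add: mult.commute mult.left_commute)
  qed
  have wb: "norm (w t) \<le> Bv" if t: "t \<in> {-A..A}" for t
  proof -
    have m1: "-1 \<in> {-A..A}" using A by auto
    have "norm (w t - w (-1)) \<le> C * G + 2 * A * Hb"
    proof (cases "t \<le> -1")
      case True then show ?thesis using wdiff[OF True t m1] by (simp add: norm_minus_commute)
    next
      case False then show ?thesis using wdiff[of "-1" t] t m1 by simp
    qed
    then show ?thesis unfolding Bv_def using w0 norm_triangle_ineq[of "w t - w (-1)" "w (-1)"] by simp
  qed
  have ydiff: "norm (y b - y a) \<le> 2 * A * Bv" if ab: "a \<le> b" "a \<in> {-A..A}" "b \<in> {-A..A}" for a b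
  proof -
    have "norm (y b - y a) \<le> integral {a..b} (\<lambda>q. Bv)"
      by (rule ftc_norm[OF ab(1) dy]) (use ab wb in auto)
    also have "\<dots> = Bv * (b - a)" using ab by (simp add: content_real)
    also have "\<dots> \<le> Bv * (2 * A)"
      using ab wb[of a] by (intro mult_left_mono) (auto intro: order_trans[OF norm_ge_zero])
    finally show ?thesis by (simp add: mult.commute)
  qed
  show ?thesis
  proof
    fix t assume t: "t \<in> {-A..A}"
    have m1: "-1 \<in> {-A..A}" using A by auto
    have "norm (y t - y (-1)) \<le> 2 * A * Bv"
    proof (cases "t \<le> -1")
      case True then show ?thesis using ydiff[OF True t m1] by (simp add: norm_minus_commute)
    next
      case False then show ?thesis using ydiff[of "-1" t] t m1 by simp
    qed
    then have "norm (y t) \<le> norm x0 + 2 * A * Bv"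
      using y0 norm_triangle_ineq[of "y t - y (-1)" "y (-1)"] by simp
    then show "norm (w t) \<le> norm x1 + C * G + 2 * A * Hb \<and>
      norm (y t) \<le> norm x0 + 2 * A * (norm x1 + C * G + 2 * A * Hb)"
      using wb[OF t] unfolding Bv_def by simp
  qed
qed

end

end


lemma alpha_facts:
  fixes b C G v L :: real
  assumes b: "0 < b" and C: "0 \<le> C" and G: "0 \<le> G" and v: "0 \<le> v" and L: "0 \<le> L"
  defines "\<alpha> \<equiv> alpha_const b C G v L"
  shows "0 < \<alpha>" "\<alpha> \<le> 1" "\<alpha> * (C * L) \<le> 1/2" "C * G + v > 0 \<Longrightarrow> \<alpha> * (C * G + v) \<le> b"
proof -
  show "0 < \<alpha>" unfolding \<alpha>_def alpha_const_def using b by (auto simp: mult.commute)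
  show "\<alpha> \<le> 1" unfolding \<alpha>_def alpha_const_def by auto
  show "\<alpha> * (C * L) \<le> 1/2"
  proof (cases "L * C > 0")
    case True
    have "\<alpha> \<le> 1 / (2 * L * C)" unfolding \<alpha>_def alpha_const_def using True by auto
    then have "\<alpha> * (C * L) \<le> 1 / (2 * L * C) * (C * L)" using C L by (intro mult_right_mono) auto
    also have "\<dots> = 1/2" using True by (auto simp: field_simps)
    finally show ?thesis .
  next
    case False
    then have "C * L = 0" using C L by (metis mult.commute mult_nonneg_nonneg order_less_le)
    then show ?thesis by (simp only: mult_zero_right)
  qed
  assume P: "C * G + v > 0"
  have "\<alpha> \<le> b / (C * G + v)" unfolding \<alpha>_def alpha_const_def using P by auto
  then show "\<alpha> * (C * G + v) \<le> b" using P by (simp add: field_simps)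
qed

lemma key_ineq:
  fixes b C G v L \<epsilon> t M :: real
  assumes b: "0 < b" and C: "0 \<le> C" and G: "0 \<le> G" and v: "0 \<le> v" and L: "0 \<le> L" and e: "0 < \<epsilon>"
  defines "\<alpha> \<equiv> alpha_const b C G v L"
  shows "t \<le> \<alpha> - \<epsilon> \<Longrightarrow> v * (t + 1) + M + max 0 (t + \<epsilon>) * (C * G) \<le> b + v + M"
    and "t < \<alpha> - \<epsilon> \<Longrightarrow> v * (t + 1) + M + max 0 (t + \<epsilon>) * (C * G) < b + v + M"
proof -
  note af = alpha_facts[OF b C G v L, folded \<alpha>_def]
  define P where "P = C * G"
  have P0: "0 \<le> P" unfolding P_def using C G by simp
  have red: "v * (t + 1) + M + max 0 (t + \<epsilon>) * (C * G) = (v * t + max 0 (t + \<epsilon>) * P) + v + M"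
    unfolding P_def by (simp add: algebra_simps)
  {
    assume t: "t \<le> \<alpha> - \<epsilon>"
    have "v * t + max 0 (t + \<epsilon>) * P \<le> b"
    proof (cases "P + v > 0")
      case True
      have "v * t \<le> v * \<alpha>" using t e v by (intro mult_left_mono) auto
      moreover have "max 0 (t + \<epsilon>) * P \<le> \<alpha> * P" using t af(1) P0 by (intro mult_right_mono) auto
      moreover have "\<alpha> * (P + v) \<le> b" using af(4) True unfolding P_def by simp
      ultimately show ?thesis by (simp add: algebra_simps)
    next
      case False
      then have "P = 0" "v = 0" using P0 v by auto
      then show ?thesis using b by simp
    qed
    then show "v * (t + 1) + M + max 0 (t + \<epsilon>) * (C * G) \<le> b + v + M" unfolding red by simp
  }
  {
    assume t: "t < \<alpha> - \<epsilon>"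
    have "v * t + max 0 (t + \<epsilon>) * P < b"
    proof (cases "P + v > 0")
      case True
      have A1: "v * t \<le> v * \<alpha>" using t e v by (intro mult_left_mono) auto
      have A2: "max 0 (t + \<epsilon>) * P \<le> \<alpha> * P" using t af(1) P0 by (intro mult_right_mono) auto
      have A3: "\<alpha> * (P + v) \<le> b" using af(4) True unfolding P_def by simp
      have "v * t < v * \<alpha> \<or> max 0 (t + \<epsilon>) * P < \<alpha> * P"
      proof (cases "v > 0")
        case True
        then show ?thesis using t e by simp
      next
        case False
        then have "P > 0" using \<open>P + v > 0\<close> v by simp
        moreover have "max 0 (t + \<epsilon>) < \<alpha>" using t af(1) by simp
        ultimately show ?thesis by simp
      qed
      then show ?thesis using A1 A2 A3 by (auto simp: algebra_simps)
    next
      case False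
      then have "P = 0" "v = 0" using P0 v by auto
      then show ?thesis using b by simp
    qed
    then show "v * (t + 1) + M + max 0 (t + \<epsilon>) * (C * G) < b + v + M" unfolding red by simp
  }
qed


theorem lemma3p2:
  fixes g :: "real^'n \<Rightarrow> real^'n" and h :: "real \<Rightarrow> real^'n"
    and \<rho> :: "real \<Rightarrow> real \<Rightarrow> real"
    and \<eta> C b L :: real and x0 x1 :: "real^'n"
  assumes g_smooth: "smooth_fun g" and h_smooth: "smooth_fun h"
    and \<rho>_smooth: "\<And>\<epsilon>. \<epsilon> \<in> {0<..<1} \<Longrightarrow> smooth_fun (\<rho> \<epsilon>)"
    and \<rho>_supp: "\<And>\<epsilon>. \<epsilon> \<in> {0<..<1} \<Longrightarrow> closure {t. \<rho> \<epsilon> t \<noteq> 0} \<subseteq> {-\<epsilon>..\<epsilon>}"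
    and \<eta>_pos: "0 < \<eta>" and \<eta>_le: "\<eta> \<le> 1" and C_nonneg: "0 \<le> C"
    and \<rho>_L1: "\<And>\<epsilon>. \<epsilon> \<in> {0<..<\<eta>} \<Longrightarrow> integral UNIV (\<lambda>t. \<bar>\<rho> \<epsilon> t\<bar>) \<le> C"
    and b_pos: "0 < b"
    and L_lip: "L-lipschitz_on
       (cball x0 (b + norm x1 + integral {-1..1} (\<lambda>s. integral {-1..s} (\<lambda>r. norm (h r))))) g"
  shows
   "(let M = integral {-1..1} (\<lambda>s. integral {-1..s} (\<lambda>r. norm (h r)));
         I = cball x0 (b + norm x1 + M);
         G = Sup ((\<lambda>y. norm (g y)) ` I);
         \<alpha> = alpha_const b C G (norm x1) L
     in (\<forall>\<epsilon>\<in>{0<..<\<eta>}.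
           (\<exists>x v. ivp_sol g (\<rho> \<epsilon>) h x0 x1 {-1..\<alpha> - \<epsilon>} x v) \<and>
           (\<forall>x v y w. ivp_sol g (\<rho> \<epsilon>) h x0 x1 {-1..\<alpha> - \<epsilon>} x v \<and>
                      ivp_sol g (\<rho> \<epsilon>) h x0 x1 {-1..\<alpha> - \<epsilon>} y w \<longrightarrow>
                      (\<forall>t\<in>{-1..\<alpha> - \<epsilon>}. x t = y t \<and> v t = w t))))
    \<and> (\<exists>\<epsilon>0>0. \<epsilon>0 \<le> \<eta> \<and>
         (\<forall>\<epsilon>\<in>{0<..<\<epsilon>0}.
            (\<exists>x v. ivp_sol g (\<rho> \<epsilon>) h x0 x1 UNIV x v) \<and>
            (\<forall>x v y w. ivp_sol g (\<rho> \<epsilon>) h x0 x1 UNIV x v \<and> ivp_sol g (\<rho> \<epsilon>) h x0 x1 UNIV y w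
                       \<longrightarrow> x = y \<and> v = w)) \<and>
         (\<forall>K. compact K \<longrightarrow> (\<exists>B. \<forall>\<epsilon>\<in>{0<..<\<epsilon>0}. \<forall>x v.
             ivp_sol g (\<rho> \<epsilon>) h x0 x1 UNIV x v \<longrightarrow> (\<forall>t\<in>K. norm (x t) \<le> B \<and> norm (v t) \<le> B))))"
proof -
  define M where "M = integral {-1..1} (\<lambda>s. integral {-1..s} (\<lambda>r. norm (h r)))"
  define R where "R = b + norm x1 + M"
  define G where "G = Sup ((\<lambda>y. norm (g y)) ` cball x0 R)"
  define \<alpha> where "\<alpha> = alpha_const b C G (norm x1) L"
  have gc: "continuous_on UNIV g" using g_smooth unfolding smooth_fun_def by blast
  have hc: "continuous_on UNIV h" using h_smooth unfolding smooth_fun_def by blast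
  have hnc: "continuous_on S (\<lambda>q. norm (h q))" for S
    using hc by (intro continuous_intros) (auto intro: continuous_on_subset)
  have M0: "0 \<le> M" unfolding M_def
    using hnc by (intro integral_nonneg integrable_continuous_real ind_cont) (auto intro!: integral_nonneg integrable_continuous_real)
  have R0: "0 \<le> R" unfolding R_def using M0 b_pos by simp
  have lip: "L-lipschitz_on (cball x0 R) g" using L_lip unfolding R_def M_def .
  have L0: "0 \<le> L" using lipschitz_on_nonneg[OF lip] .
  have bdd: "bdd_above ((\<lambda>y. norm (g y)) ` cball x0 R)"
    by (intro bounded_imp_bdd_above compact_imp_bounded compact_continuous_image continuous_intros
        continuous_on_subset[OF gc]) auto
  have g_bd: "norm (g y) \<le> G" if "y \<in> cball x0 R" for y
    unfolding G_def using bdd that by (intro cSUP_upper) auto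
  have G0: "0 \<le> G" using g_bd[of x0] R0 by (auto intro: order_trans[OF norm_ge_zero])
  define f where "f y = g (closest_point (cball x0 R) y)" for y
  have cpin: "closest_point (cball x0 R) y \<in> cball x0 R" for y
    using R0 by (intro closest_point_in_set) auto
  have cplip: "dist (closest_point (cball x0 R) a) (closest_point (cball x0 R) b') \<le> dist a b'" for a b'
    using R0 by (intro closest_point_lipschitz) auto
  have f_lip: "norm (f a - f b') \<le> L * norm (a - b')" for a b'
  proof -
    have "dist (f a) (f b') \<le> L * dist (closest_point (cball x0 R) a) (closest_point (cball x0 R) b')"
      unfolding f_def using lipschitz_onD[OF lip cpin cpin] .
    also have "\<dots> \<le> L * dist a b'" using cplip L0 by (intro mult_left_mono) auto
    finally show ?thesis by (simp add: dist_norm)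
  qed
  have fc: "continuous_on UNIV f" unfolding f_def
    using R0 by (intro continuous_on_compose2[OF gc continuous_on_closest_point]) auto
  have f_bd: "norm (f y) \<le> G" for y unfolding f_def using g_bd cpin by blast
  have fg: "f y = g y" if "y \<in> cball x0 R" for y unfolding f_def using closest_point_self[OF that] by simp
  note af = alpha_facts[OF b_pos C_nonneg G0 norm_ge_zero L0, of x1, folded \<alpha>_def]
  have ctx: "ctx2 (\<rho> \<epsilon>) \<epsilon> C g f h x0 x1 L G M R \<alpha>" if e: "\<epsilon> \<in> {0<..<\<eta>}" for \<epsilon>
  proof (intro ctx2.intro rctx.intro ctx2_axioms.intro)
    have e1: "\<epsilon> \<in> {0<..<1}" using e \<eta>_le by auto
    show rc: "continuous_on UNIV (\<rho> \<epsilon>)" using \<rho>_smooth[OF e1] unfolding smooth_fun_def by blast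
    show rz: "\<rho> \<epsilon> t = 0" if t: "t \<notin> {-\<epsilon><..<\<epsilon>}" for t
    proof (rule ccontr)
      assume nz: "\<rho> \<epsilon> t \<noteq> 0"
      have op: "open {t. \<rho> \<epsilon> t \<noteq> 0}"
        by (rule open_Collect_neq[OF rc continuous_on_const])
      have sub: "{t. \<rho> \<epsilon> t \<noteq> 0} \<subseteq> {-\<epsilon>..\<epsilon>}"
        by (rule order_trans[OF closure_subset \<rho>_supp[OF e1]])
      have "{t. \<rho> \<epsilon> t \<noteq> 0} \<subseteq> {-\<epsilon><..<\<epsilon>}"
        using interior_maximal[OF sub op] by simp
      moreover have "t \<in> {t. \<rho> \<epsilon> t \<noteq> 0}" using nz by simp
      ultimately have "t \<in> {-\<epsilon><..<\<epsilon>}" by (rule subsetD)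
      then show False using t by simp
    qed
    show "0 < \<epsilon>" "\<epsilon> \<le> 1" using e \<eta>_le by auto
    show "0 \<le> C" by (rule C_nonneg)
    show "integral {a..b'} (\<lambda>t. \<bar>\<rho> \<epsilon> t\<bar>) \<le> C" for a b'
    proof -
      have ac: "continuous_on S (\<lambda>t. \<bar>\<rho> \<epsilon> t\<bar>)" for S
        using rc by (intro continuous_intros) (auto intro: continuous_on_subset)
      have iu: "(\<lambda>t. \<bar>\<rho> \<epsilon> t\<bar>) integrable_on UNIV"
      proof (rule integrable_on_superset)
        show "(\<lambda>t. \<bar>\<rho> \<epsilon> t\<bar>) integrable_on {-1..1}" by (intro integrable_continuous_real ac)
        show "\<bar>\<rho> \<epsilon> x\<bar> = 0" if "x \<notin> {-1..1}" for x
          using rz[of x] that \<open>\<epsilon> \<le> 1\<close> by auto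
      qed auto
      have "integral {a..b'} (\<lambda>t. \<bar>\<rho> \<epsilon> t\<bar>) \<le> integral UNIV (\<lambda>t. \<bar>\<rho> \<epsilon> t\<bar>)"
        using iu by (intro integral_subset_le integrable_continuous_real ac) auto
      also have "\<dots> \<le> C" using \<rho>_L1[OF e] .
      finally show ?thesis .
    qed
    show "continuous_on UNIV g" "continuous_on UNIV f" "continuous_on UNIV h" by (fact gc fc hc)+
    show "\<And>a b. norm (f a - f b) \<le> L * norm (a - b)" by (rule f_lip)
    show "0 \<le> L" "0 \<le> G" "0 \<le> R" by (fact L0 G0 R0)+
    show "\<And>y. norm (f y) \<le> G" by (rule f_bd)
    show "\<And>y. y \<in> cball x0 R \<Longrightarrow> norm (g y) \<le> G" by (rule g_bd)
    show "\<And>y. y \<in> cball x0 R \<Longrightarrow> f y = g y" by (rule fg)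
    show "M = integral {-1..1} (\<lambda>s. integral {-1..s} (\<lambda>q. norm (h q)))" by (rule M_def)
    show "\<And>t. -1 \<le> t \<Longrightarrow> t \<le> \<alpha> - \<epsilon> \<Longrightarrow> norm x1 * (t + 1) + M + max 0 (t + \<epsilon>) * (C * G) \<le> R"
      unfolding R_def \<alpha>_def using e
      by (intro key_ineq(1)[OF b_pos C_nonneg G0 norm_ge_zero L0]) (auto simp: add.commute add.left_commute)
    show "\<And>t. -1 \<le> t \<Longrightarrow> t < \<alpha> - \<epsilon> \<Longrightarrow> norm x1 * (t + 1) + M + max 0 (t + \<epsilon>) * (C * G) < R"
      unfolding R_def \<alpha>_def using e
      by (intro key_ineq(2)[OF b_pos C_nonneg G0 norm_ge_zero L0]) (auto simp: add.commute add.left_commute)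
    show "\<alpha> * (C * L) \<le> 1/2" "0 < \<alpha>" "\<alpha> \<le> 1" by (fact af(3) af(1) af(2))+
  qed
  have part1: "\<forall>\<epsilon>\<in>{0<..<\<eta>}.
           (\<exists>x v. ivp_sol g (\<rho> \<epsilon>) h x0 x1 {-1..\<alpha> - \<epsilon>} x v) \<and>
           (\<forall>x v y w. ivp_sol g (\<rho> \<epsilon>) h x0 x1 {-1..\<alpha> - \<epsilon>} x v \<and>
                      ivp_sol g (\<rho> \<epsilon>) h x0 x1 {-1..\<alpha> - \<epsilon>} y w \<longrightarrow>
                      (\<forall>t\<in>{-1..\<alpha> - \<epsilon>}. x t = y t \<and> v t = w t))"
    using ctx2.part1_exists[OF ctx] ctx2.uniq1[OF ctx] by blast
  define \<epsilon>0 where "\<epsilon>0 = min \<eta> (\<alpha> / 2)"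
  have e0: "0 < \<epsilon>0" "\<epsilon>0 \<le> \<eta>" unfolding \<epsilon>0_def using \<eta>_pos af(1) by auto
  have ctxb: "ctx2 (\<rho> \<epsilon>) \<epsilon> C g f h x0 x1 L G M R \<alpha>" "\<epsilon> < \<alpha> - \<epsilon>" if "\<epsilon> \<in> {0<..<\<epsilon>0}" for \<epsilon>
    using that ctx[of \<epsilon>] unfolding \<epsilon>0_def by auto
  have part2: "\<forall>\<epsilon>\<in>{0<..<\<epsilon>0}.
            (\<exists>x v. ivp_sol g (\<rho> \<epsilon>) h x0 x1 UNIV x v) \<and>
            (\<forall>x v y w. ivp_sol g (\<rho> \<epsilon>) h x0 x1 UNIV x v \<and> ivp_sol g (\<rho> \<epsilon>) h x0 x1 UNIV y w
                       \<longrightarrow> x = y \<and> v = w)"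
    using ctx2.exists_global[OF ctxb] ctx2.uniq_global[OF ctxb] by blast
  have part3: "\<forall>K. compact K \<longrightarrow> (\<exists>B. \<forall>\<epsilon>\<in>{0<..<\<epsilon>0}. \<forall>x v.
             ivp_sol g (\<rho> \<epsilon>) h x0 x1 UNIV x v \<longrightarrow> (\<forall>t\<in>K. norm (x t) \<le> B \<and> norm (v t) \<le> B))"
  proof (intro allI impI)
    fix K :: "real set" assume K: "compact K"
    obtain A0 where A0: "\<And>t. t \<in> K \<Longrightarrow> norm t \<le> A0"
      using compact_imp_bounded[OF K] unfolding bounded_iff by blast
    define A where "A = max 1 A0"
    have A1: "1 \<le> A" unfolding A_def by simp
    have KA: "t \<in> {-A..A}" if "t \<in> K" for t using A0[OF that] unfolding A_def by auto
    obtain Hb where Hb: "\<And>t. t \<in> {-A..A} \<Longrightarrow> norm (h t) \<le> Hb"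
      using compact_imp_bounded[OF compact_continuous_image[OF continuous_on_subset[OF hc] compact_Icc]]
      unfolding bounded_iff by blast
    define B where "B = max (norm x1 + C * G + 2 * A * Hb) (norm x0 + 2 * A * (norm x1 + C * G + 2 * A * Hb))"
    show "\<exists>B. \<forall>\<epsilon>\<in>{0<..<\<epsilon>0}. \<forall>x v.
             ivp_sol g (\<rho> \<epsilon>) h x0 x1 UNIV x v \<longrightarrow> (\<forall>t\<in>K. norm (x t) \<le> B \<and> norm (v t) \<le> B)"
    proof (intro exI[of _ B] ballI allI impI)
      fix \<epsilon> x v t assume e: "\<epsilon> \<in> {0<..<\<epsilon>0}" and s: "ivp_sol g (\<rho> \<epsilon>) h x0 x1 UNIV x v" and t: "t \<in> K"
      have "norm (v t) \<le> norm x1 + C * G + 2 * A * Hb \<and>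
          norm (x t) \<le> norm x0 + 2 * A * (norm x1 + C * G + 2 * A * Hb)"
        using ctx2.bound_global[OF ctxb[OF e] s A1 Hb] KA[OF t] by blast
      then show "norm (x t) \<le> B \<and> norm (v t) \<le> B" unfolding B_def by auto
    qed
  qed
  show ?thesis
    unfolding Let_def M_def[symmetric] R_def[symmetric] G_def[symmetric] \<alpha>_def[symmetric]
    using part1 part2 part3 e0 by blast
qed

end
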